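(* Let $p\ge1$, $m=2^p$, and inject two identical bosons in input modes $1$ and $2$ of the Sylvester interferometer $U_m=\frac{1}{\sqrt m}H(m)$. Among all $\frac12 m(m+1)$ two-particle output states $(i,j)$ with $1\le i\le j\le m$, the number of suppressed states is $m^2/4$, so the fraction of suppressed states is $\frac{1}{2}\cdot\frac{m}{m+1}$.
   Context: For $m=2^p$, the Sylvester matrix $H(m)$ is defined recursively by $H(1)=[1]$ and $H(2^p)=\begin{bmatrix}H(2^{p-1})&H(2^{p-1})\\ H(2^{p-1})&-H(2^{p-1})\end{bmatrix}$, rows and columns indexed $1,\dots,m$. An $n$-particle state on $m$ modes is a nondecreasing tuple $\vec t=(t_1\le\dots\le t_n)$ with $t_i\in\{1,\dots,m\}$; $\mu_k(\vec t)=|\{i:t_i=k\}|$. For input $\vec s$ and output $\vec t$, the scattering matrix is $S_{i,j}=U_{t_i,s_j}$; the bosonic amplitude is $\mathrm{perm}\,S/\sqrt{\prod_k\mu_k(\vec s)!\prod_k\mu_k(\vec t)!}$. An output state is suppressed if its amplitude is zero. *)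

theory Defs
  imports Complex_Main "HOL-Combinatorics.Permutations"
begin

text \<open>Sylvester matrix H(2^p), entries indexed 1..2^p (recursive block definition).
  Entries outside the index range are irrelevant.\<close>
fun sylvester :: "nat \<Rightarrow> nat \<Rightarrow> nat \<Rightarrow> int" where
  "sylvester 0 i j = 1"
| "sylvester (Suc p) i j =
     (let h = 2 ^ p in
      if i \<le> h \<and> j \<le> h then sylvester p i j
      else if i \<le> h then sylvester p i (j - h)
      else if j \<le> h then sylvester p (i - h) j
      else - sylvester p (i - h) (j - h))"

definition sylv_U :: "nat \<Rightarrow> nat \<Rightarrow> nat \<Rightarrow> real" where
  "sylv_U p i j = real_of_int (sylvester p i j) / sqrt (2 ^ p)"

definition states :: "nat \<Rightarrow> nat \<Rightarrow> nat list set" where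
  "states m n = {t. length t = n \<and> sorted t \<and> set t \<subseteq> {1..m}}"

definition occ :: "nat \<Rightarrow> nat list \<Rightarrow> nat" where
  "occ k t = count_list t k"

definition permanent :: "nat \<Rightarrow> (nat \<Rightarrow> nat \<Rightarrow> real) \<Rightarrow> real" where
  "permanent n A = (\<Sum>\<sigma> | \<sigma> permutes {..<n}. \<Prod>i<n. A i (\<sigma> i))"

definition scattering :: "(nat \<Rightarrow> nat \<Rightarrow> real) \<Rightarrow> nat list \<Rightarrow> nat list \<Rightarrow> nat \<Rightarrow> nat \<Rightarrow> real" where
  "scattering U s t i j = U (t ! i) (s ! j)"

definition amplitude :: "(nat \<Rightarrow> nat \<Rightarrow> real) \<Rightarrow> nat \<Rightarrow> nat list \<Rightarrow> nat list \<Rightarrow> real" where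
  "amplitude U m s t =
     permanent (length t) (scattering U s t) /
     sqrt ((\<Prod>k\<in>{1..m}. fact (occ k s)) * (\<Prod>k\<in>{1..m}. fact (occ k t)))"

definition suppressed :: "(nat \<Rightarrow> nat \<Rightarrow> real) \<Rightarrow> nat \<Rightarrow> nat list \<Rightarrow> nat list \<Rightarrow> bool" where
  "suppressed U m s t \<longleftrightarrow> amplitude U m s t = 0"

end

theory Submission
  imports Defs
begin

lemma syl1: "sylvester p i (Suc 0) = 1"
  by (induction p arbitrary: i) (auto simp: Let_def)

lemma syl2: "i \<ge> 1 \<Longrightarrow> i \<le> 2 ^ Suc p \<Longrightarrow> sylvester (Suc p) i 2 = (if odd i then 1 else -1)"
proof (induction p arbitrary: i)
  case 0 then have "i = 1 \<or> i = 2" by auto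
  then show ?case by (auto simp: Let_def syl1[simplified])
next
  case (Suc p)
  have h: "(2::nat) \<le> 2 ^ Suc p" by simp
  show ?case
  proof (cases "i \<le> 2 ^ Suc p")
    case True then show ?thesis using Suc h by (simp add: Let_def del: power_Suc)
  next
    case False
    have "odd (i - 2 ^ Suc p) = odd i" using False by (simp add: even_diff_nat)
    have e: "sylvester (Suc (Suc p)) i 2 = sylvester (Suc p) (i - 2 ^ Suc p) 2"
      using False h by (simp only: sylvester.simps(2) Let_def) simp
    have "sylvester (Suc p) (i - 2 ^ Suc p) 2 = (if odd (i - 2 ^ Suc p) then 1 else -1)"
      using Suc.prems False by (intro Suc.IH) auto
    then show ?thesis using e \<open>odd (i - 2 ^ Suc p) = odd i\<close> by simp
  qed
qed

lemma perm2: "{\<sigma>. \<sigma> permutes {..<2::nat}} = {id, Transposition.transpose 0 1}"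
proof (safe)
  fix \<sigma> assume s: "\<sigma> permutes {..<2::nat}" and ne: "\<sigma> \<noteq> id"
  have out: "\<And>x. x \<ge> 2 \<Longrightarrow> \<sigma> x = x" using s by (auto simp: permutes_def)
  have r: "\<And>x. x < 2 \<Longrightarrow> \<sigma> x < 2" using s by (meson lessThan_iff permutes_in_image)
  have inj: "inj \<sigma>" using s permutes_inj by blast
  have "\<sigma> 0 \<noteq> 0"
  proof
    assume z: "\<sigma> 0 = 0"
    have "\<sigma> 1 \<noteq> 0" using inj z by (metis inj_eq zero_neq_one)
    then have "\<sigma> 1 = 1" using r[of 1] by linarith
    then have "\<sigma> = id" using z out by (metis eq_id_iff less_2_cases not_less One_nat_def)
    then show False using ne by simp
  qed
  then have a: "\<sigma> 0 = 1" using r[of 0] by linarith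
  have "\<sigma> 1 \<noteq> 1" using inj a by (metis inj_eq zero_neq_one)
  then have b: "\<sigma> 1 = 0" using r[of 1] by linarith
  show "\<sigma> = Transposition.transpose 0 1"
  proof
    fix x show "\<sigma> x = Transposition.transpose 0 1 x"
    proof (cases "x < 2")
      case True then have "x = 0 \<or> x = 1" by auto
      then show ?thesis using a b by auto
    next
      case False then show ?thesis using out[of x] by (auto simp: transpose_def)
    qed
  qed
next
  show "id permutes {..<2::nat}" by (simp add: permutes_id)
next
  show "Transposition.transpose 0 1 permutes {..<2::nat}" by (rule permutes_swap_id) auto
qed

lemma permanent2: "permanent 2 A = A 0 0 * A 1 1 + A 0 1 * A 1 0"
proof -
  have "id \<noteq> Transposition.transpose (0::nat) 1" by (metis id_apply transpose_apply_first zero_neq_one)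
  then show ?thesis unfolding permanent_def perm2
  by (simp add: lessThan_nat_numeral transpose_def)
qed

definition pairs :: "nat \<Rightarrow> (nat \<Rightarrow> nat \<Rightarrow> bool) \<Rightarrow> (nat \<times> nat) set" where
  "pairs n Q = {(i,j). 1 \<le> i \<and> i \<le> j \<and> j \<le> n \<and> Q i j}"

lemma pairs_0: "pairs 0 Q = {}" by (auto simp: pairs_def)

lemma pairs_Suc: "pairs (Suc n) Q = pairs n Q \<union> (\<lambda>i. (i, Suc n)) ` {i\<in>{1..Suc n}. Q i (Suc n)}"
  by (auto simp: pairs_def le_Suc_eq)

lemma pairs_finite: "finite (pairs n Q)"
proof -
  have "pairs n Q \<subseteq> {1..n} \<times> {1..n}" by (auto simp: pairs_def)
  then show ?thesis by (meson finite_SigmaI finite_atLeastAtMost finite_subset)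
qed

lemma card_pairs_Suc: "card (pairs (Suc n) Q) = card (pairs n Q) + card {i\<in>{1..Suc n}. Q i (Suc n)}"
proof -
  have "card (pairs (Suc n) Q) = card (pairs n Q) + card ((\<lambda>i. (i, Suc n)) ` {i\<in>{1..Suc n}. Q i (Suc n)})"
    unfolding pairs_Suc by (rule card_Un_disjoint) (auto simp: pairs_finite, auto simp: pairs_def)
  also have "card ((\<lambda>i. (i, Suc n)) ` {i\<in>{1..Suc n}. Q i (Suc n)}) = card {i\<in>{1..Suc n}. Q i (Suc n)}"
    by (rule card_image) (auto simp: inj_on_def)
  finally show ?thesis .
qed

lemma card_filter_Suc: "card {i\<in>{1..Suc n}. P i} = card {i\<in>{1..n}. P i} + (if P (Suc n) then 1 else 0)"
proof -
  have e: "{i\<in>{1..Suc n}. P i} = (if P (Suc n) then insert (Suc n) {i\<in>{1..n}. P i} else {i\<in>{1..n}. P i})"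
    by (auto simp: le_Suc_eq)
  show ?thesis unfolding e by auto
qed

lemma card_even: "card {i\<in>{1..n}. even i} = n div 2"
  apply (induction n) apply simp apply (subst card_filter_Suc) apply auto done

lemma card_odd: "card {i\<in>{1..n}. odd i} = (n + 1) div 2"
  apply (induction n) apply simp apply (subst card_filter_Suc) apply auto done

lemma card_all: "card {i\<in>{1..n}. True} = n"
proof -
  have "{i\<in>{1..n}. True} = {1..n}" by auto
  then show ?thesis by simp
qed

lemma card_pairs_all: "card (pairs n (\<lambda>i j. True)) = n * (n + 1) div 2"
  apply (induction n) apply (simp add: pairs_0) apply (subst card_pairs_Suc) apply (subst card_all) apply simp done

lemma odd_filter: "{i\<in>{1..Suc n}. odd (i + Suc n)} = (if even n then {i\<in>{1..Suc n}. even i} else {i\<in>{1..Suc n}. odd i})"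
  by auto

lemma card_pairs_odd: "card (pairs n (\<lambda>i j. odd (i + j))) = n ^ 2 div 4"
proof (induction n)
  case 0 then show ?case by (simp add: pairs_0)
next
  case (Suc n)
  show ?case
  proof (cases "even n")
    case True
    then obtain k where k: "n = 2 * k" by blast
    have "card (pairs (Suc n) (\<lambda>i j. odd (i + j))) = n^2 div 4 + Suc n div 2"
      unfolding card_pairs_Suc Suc odd_filter using True by (simp only: if_True card_even)
    then show ?thesis by (simp add: k power2_eq_square algebra_simps)
  next
    case False
    then obtain k where k: "n = 2 * k + 1" using oddE by blast
    have "card (pairs (Suc n) (\<lambda>i j. odd (i + j))) = n^2 div 4 + (Suc n + 1) div 2"
      unfolding card_pairs_Suc Suc odd_filter using False by (simp only: if_False card_odd)
    then show ?thesis by (simp add: k power2_eq_square algebra_simps)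
  qed
qed

lemma states2: "states m 2 = (\<lambda>(i,j). [i,j]) ` pairs m (\<lambda>i j. True)"
proof safe
  fix t assume "t \<in> states m 2"
  then have t: "length t = 2" "sorted t" "set t \<subseteq> {1..m}" by (auto simp: states_def)
  then obtain a b where ab: "t = [a,b]"
    by (metis (no_types, lifting) One_nat_def Suc_length_conv length_0_conv numeral_2_eq_2)
  then show "t \<in> (\<lambda>(i,j). [i,j]) ` pairs m (\<lambda>i j. True)"
    using t by (auto simp: pairs_def image_iff)
next
  fix i j assume "(i,j) \<in> pairs m (\<lambda>i j. True)"
  then show "[i,j] \<in> states m 2" by (auto simp: pairs_def states_def)
qed

lemma inj_pairs: "inj_on (\<lambda>(i,j). [i::nat,j]) A"
  by (auto simp: inj_on_def)

lemma supp_char: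
  assumes "1 \<le> i" "i \<le> j" "j \<le> 2 ^ Suc q"
  shows "suppressed (sylv_U (Suc q)) m [1,2] [i,j] \<longleftrightarrow> odd (i + j)"
proof -
  let ?c = "\<lambda>k. (if odd k then 1 else -1 :: real)"
  define r where "r = sqrt (2 ^ Suc q :: real)"
  have r: "r > 0" by (simp add: r_def)
  have U1: "\<And>k. sylv_U (Suc q) k 1 = 1 / r" by (simp add: sylv_U_def syl1[simplified] r_def)
  have U1': "\<And>k. sylv_U (Suc q) k (Suc 0) = 1 / r" using U1 by simp
  have U2: "\<And>k. 1 \<le> k \<Longrightarrow> k \<le> 2 ^ Suc q \<Longrightarrow> sylv_U (Suc q) k 2 = ?c k / r"
    using syl2 by (simp add: sylv_U_def r_def del: power_Suc sylvester.simps)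
  have perm: "permanent (length [i,j]) (scattering (sylv_U (Suc q)) [1,2] [i,j]) = (?c j + ?c i) / (r * r)"
  proof -
    have "permanent (length [i,j]) (scattering (sylv_U (Suc q)) [1,2] [i,j]) =
      sylv_U (Suc q) i 1 * sylv_U (Suc q) j 2 + sylv_U (Suc q) i 2 * sylv_U (Suc q) j 1"
      using permanent2[of "scattering (sylv_U (Suc q)) [1,2] [i,j]"] by (simp add: scattering_def numeral_2_eq_2)
    then show ?thesis using assms
      by (simp add: U1 U1' U2 add_divide_distrib del: power_Suc)
  qed
  have den: "sqrt ((\<Prod>k\<in>{1..m}. fact (occ k [1,2])) * (\<Prod>k\<in>{1..m}. fact (occ k [i,j]))) \<noteq> (0::real)"
    by (simp add: prod_pos fact_gt_zero less_imp_neq[symmetric] mult_pos_pos)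
  have "suppressed (sylv_U (Suc q)) m [1,2] [i,j] \<longleftrightarrow> ?c j + ?c i = 0"
    unfolding suppressed_def amplitude_def perm using den r by simp
  also have "\<dots> \<longleftrightarrow> odd (i + j)" by auto
  finally show ?thesis .
qed

theorem corollary1:
  fixes p m :: nat
  assumes "p \<ge> 1" and "m = 2 ^ p"
  shows "card (states m 2) = m * (m + 1) div 2 \<and>
           card {t \<in> states m 2. suppressed (sylv_U p) m [1, 2] t} = m ^ 2 div 4 \<and>
           real (card {t \<in> states m 2. suppressed (sylv_U p) m [1, 2] t}) / real (card (states m 2))
           = 1 / 2 * (real m / (real m + 1))"
proof -
  obtain q where q: "p = Suc q" using assms(1) by (cases p) auto
  have c1: "card (states m 2) = m * (m + 1) div 2"
    unfolding states2 by (simp add: card_image[OF inj_pairs] card_pairs_all)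
  have "{t \<in> states m 2. suppressed (sylv_U p) m [1, 2] t} = (\<lambda>(i,j). [i,j]) ` pairs m (\<lambda>i j. odd (i + j))"
    unfolding states2 using supp_char assms(2) q by (auto simp: pairs_def image_iff)
  then have c2: "card {t \<in> states m 2. suppressed (sylv_U p) m [1, 2] t} = m ^ 2 div 4"
    by (simp only: card_image[OF inj_pairs] card_pairs_odd)
  obtain k where k: "m = 2 * k" "k \<ge> 1" using assms q by (auto simp: power_Suc)
  have e1: "m * (m + 1) div 2 = k * (2 * k + 1)" using k by (simp add: algebra_simps)
  have e2: "m ^ 2 div 4 = k * k" using k by (simp add: power2_eq_square)
  have "real (k * k) / real (k * (2 * k + 1)) = 1 / 2 * (real (2*k) / (real (2*k) + 1))"
  proof -
    have kp: "real k \<noteq> 0" using k by simp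
    have "real (k * k) / real (k * (2 * k + 1)) = (real k * real k) / (real k * (2 * real k + 1))"
      by (simp only: of_nat_mult of_nat_add of_nat_1 of_nat_numeral)
    also have "\<dots> = real k / (2 * real k + 1)" using kp by (rule nonzero_mult_divide_mult_cancel_left)
    also have "\<dots> = 1 / 2 * (real (2*k) / (real (2*k) + 1))" by simp
    finally show ?thesis .
  qed
  moreover have "m * (m + 1) div 2 = k * (2 * k + 1)" "m ^ 2 div 4 = k * k" using e1 e2 .
  ultimately show ?thesis using c1 c2 k(1) by (simp only:)
qed

end
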